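(* Let $\mathcal G$ be a doubly connected molecular graph. Construct $\mathcal G_{new}$ from $\mathcal G$ as follows: add a new molecule $\mathcal M_{new}$; replace a diffusive edge $b_0$ of $\mathcal G$ joining molecules $\mathcal M_1$ and $\mathcal M_2$ by two diffusive edges, $b_1$ joining $\mathcal M_1$ and $\mathcal M_{new}$ and $b_2$ joining $\mathcal M_2$ and $\mathcal M_{new}$; and replace a blue solid edge $b$ of $\mathcal G$ joining molecules $\mathcal M_3$ and $\mathcal M_4$ by two blue solid edges, $b_3$ joining $\mathcal M_3$ and $\mathcal M_{new}$ and $b_4$ joining $\mathcal M_4$ and $\mathcal M_{new}$. Then: (i) if a blue solid edge of $\mathcal G$ different from $b$ is redundant in $\mathcal G$, then it is also redundant in $\mathcal G_{new}$; (ii) if $b$ is redundant in $\mathcal G$, then at least one of $b_3$, $b_4$ is redundant in $\mathcal G_{new}$; moreover, if one of $b_3,b_4$ that is redundant in $\mathcal G_{new}$ is changed into a diffusive edge, then the other one becomes redundant in the resulting graph.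
   Context: A molecular graph is a finite multigraph whose vertices are called molecules and each of whose edges joins two distinct molecules and is either a diffusive edge or a blue solid edge (parallel edges are allowed). A molecular graph is doubly connected if there exist two disjoint sets of edges, $\mathcal B_{black}$ consisting only of diffusive edges and $\mathcal B_{blue}$ consisting only of blue solid or diffusive edges, such that each of $\mathcal B_{black}$ and $\mathcal B_{blue}$ contains a spanning tree of the set of all molecules. A blue solid edge $e$ of a doubly connected graph is redundant if the graph obtained by deleting $e$ is still doubly connected. Changing a blue solid edge into a diffusive edge means replacing it by a diffusive edge with the same two endpoints. *)

theory Defs
  imports Main
begin

datatype ekind = Diffusive | BlueSolid

text \<open>A molecular graph: a finite set of molecules, a finite set of edge identifiers
  (so parallel edges are allowed), an endpoint map and an edge kind.\<close>
record ('v, 'e) mgraph =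
  mols :: "'v set"
  edges :: "'e set"
  endp :: "'e \<Rightarrow> 'v set"
  kind :: "'e \<Rightarrow> ekind"

definition wf_mgraph :: "('v, 'e) mgraph \<Rightarrow> bool" where
  "wf_mgraph G \<longleftrightarrow> finite (mols G) \<and> finite (edges G) \<and>
     (\<forall>e\<in>edges G. \<exists>x y. x \<noteq> y \<and> x \<in> mols G \<and> y \<in> mols G \<and> endp G e = {x, y})"

definition adj :: "('v, 'e) mgraph \<Rightarrow> 'e set \<Rightarrow> ('v \<times> 'v) set" where
  "adj G F = {(x, y). \<exists>e\<in>F. endp G e = {x, y}}"

definition connects :: "('v, 'e) mgraph \<Rightarrow> 'e set \<Rightarrow> bool" where
  "connects G F \<longleftrightarrow> (\<forall>x\<in>mols G. \<forall>y\<in>mols G. (x, y) \<in> (adj G F)\<^sup>*)"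

definition spanning_tree :: "('v, 'e) mgraph \<Rightarrow> 'e set \<Rightarrow> bool" where
  "spanning_tree G T \<longleftrightarrow> T \<subseteq> edges G \<and> connects G T \<and>
     (\<forall>e\<in>T. \<not> connects G (T - {e}))"

definition contains_spanning_tree :: "('v, 'e) mgraph \<Rightarrow> 'e set \<Rightarrow> bool" where
  "contains_spanning_tree G F \<longleftrightarrow> (\<exists>T\<subseteq>F. spanning_tree G T)"

definition doubly_connected :: "('v, 'e) mgraph \<Rightarrow> bool" where
  "doubly_connected G \<longleftrightarrow>
     (\<exists>Bblack Bblue. Bblack \<subseteq> edges G \<and> Bblue \<subseteq> edges G \<and> Bblack \<inter> Bblue = {} \<and>
        (\<forall>e\<in>Bblack. kind G e = Diffusive) \<and>
        (\<forall>e\<in>Bblue. kind G e = BlueSolid \<or> kind G e = Diffusive) \<and>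
        contains_spanning_tree G Bblack \<and> contains_spanning_tree G Bblue)"

definition delete_edge :: "('v, 'e) mgraph \<Rightarrow> 'e \<Rightarrow> ('v, 'e) mgraph" where
  "delete_edge G e = G\<lparr>edges := edges G - {e}\<rparr>"

definition redundant :: "('v, 'e) mgraph \<Rightarrow> 'e \<Rightarrow> bool" where
  "redundant G e \<longleftrightarrow> doubly_connected G \<and> e \<in> edges G \<and> kind G e = BlueSolid \<and>
     doubly_connected (delete_edge G e)"

definition make_diffusive :: "('v, 'e) mgraph \<Rightarrow> 'e \<Rightarrow> ('v, 'e) mgraph" where
  "make_diffusive G e = G\<lparr>kind := (kind G)(e := Diffusive)\<rparr>"

definition subdivide2 ::
  "('v, 'e) mgraph \<Rightarrow> 'v \<Rightarrow> 'e \<Rightarrow> 'e \<Rightarrow> 'e \<Rightarrow> 'e \<Rightarrow> 'e \<Rightarrow> 'e \<Rightarrow>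
     'v \<Rightarrow> 'v \<Rightarrow> 'v \<Rightarrow> 'v \<Rightarrow> ('v, 'e) mgraph" where
  "subdivide2 G mnew b0 b b1 b2 b3 b4 M1 M2 M3 M4 =
     \<lparr> mols = insert mnew (mols G),
       edges = (edges G - {b0, b}) \<union> {b1, b2, b3, b4},
       endp = (endp G)(b1 := {M1, mnew}, b2 := {M2, mnew}, b3 := {M3, mnew}, b4 := {M4, mnew}),
       kind = (kind G)(b1 := Diffusive, b2 := Diffusive, b3 := BlueSolid, b4 := BlueSolid) \<rparr>"

end

theory Submission
  imports Defs
begin


lemma adj_edge: "e \<in> F \<Longrightarrow> endp G e = {u, v} \<Longrightarrow> (u, v) \<in> adj G F"
  unfolding adj_def by blast

lemma adj_sym: "(u, v) \<in> adj G F \<Longrightarrow> (v, u) \<in> adj G F"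
  unfolding adj_def by (auto simp: insert_commute)

lemma adj_rt_sym: "(u, v) \<in> (adj G F)\<^sup>* \<Longrightarrow> (v, u) \<in> (adj G F)\<^sup>*"
proof (induction rule: rtrancl_induct)
  case base then show ?case by simp
next
  case (step y z)
  then show ?case using adj_sym by (meson converse_rtrancl_into_rtrancl)
qed
lemma pair_sym: "{u, v} = {a, c} \<Longrightarrow> (a, c) \<in> (adj G F)\<^sup>* \<Longrightarrow> (u, v) \<in> (adj G F)\<^sup>*"
proof -
  assume e: "{u, v} = {a, c}" and r: "(a, c) \<in> (adj G F)\<^sup>*"
  from e have "(u = a \<and> v = c) \<or> (u = c \<and> v = a)" by (simp add: doubleton_eq_iff)
  then show ?thesis using r adj_rt_sym[OF r] by blast
qed

lemma adj_mono: "F \<subseteq> F' \<Longrightarrow> adj G F \<subseteq> adj G F'"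
  unfolding adj_def by blast

lemma connects_mono: "connects G F \<Longrightarrow> F \<subseteq> F' \<Longrightarrow> connects G F'"
proof -
  assume c: "connects G F" and s: "F \<subseteq> F'"
  have "(adj G F)\<^sup>* \<subseteq> (adj G F')\<^sup>*" using adj_mono[OF s] by (rule rtrancl_mono)
  then show ?thesis using c unfolding connects_def by blast
qed

lemma hub: "(\<forall>x\<in>mols G. (r, x) \<in> (adj G F)\<^sup>*) \<Longrightarrow> connects G F"
  unfolding connects_def
proof (intro ballI)
  fix x y assume h: "\<forall>x\<in>mols G. (r, x) \<in> (adj G F)\<^sup>*" and x: "x \<in> mols G" and y: "y \<in> mols G"
  have "(r, x) \<in> (adj G F)\<^sup>*" using h x by blast
  then have "(x, r) \<in> (adj G F)\<^sup>*" by (rule adj_rt_sym)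
  moreover have "(r, y) \<in> (adj G F)\<^sup>*" using h y by blast
  ultimately show "(x, y) \<in> (adj G F)\<^sup>*" by (rule rtrancl_trans)
qed

lemma sim:
  assumes "(x, y) \<in> (adj H F)\<^sup>*"
    and "\<And>e u v. e \<in> F \<Longrightarrow> endp H e = {u, v} \<Longrightarrow> (u, v) \<in> (adj G' F')\<^sup>*"
  shows "(x, y) \<in> (adj G' F')\<^sup>*"
  using assms(1)
proof (induction rule: rtrancl_induct)
  case base then show ?case by simp
next
  case (step y z)
  then obtain e where "e \<in> F" "endp H e = {y, z}" unfolding adj_def by blast
  then have "(y, z) \<in> (adj G' F')\<^sup>*" using assms(2) by blast
  then show ?case using step.IH by (meson rtrancl_trans)
qed

lemma cst_iff:
  assumes "finite (edges G)" "F \<subseteq> edges G"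
  shows "contains_spanning_tree G F \<longleftrightarrow> connects G F"
proof
  assume "contains_spanning_tree G F"
  then obtain T where "T \<subseteq> F" "connects G T" unfolding contains_spanning_tree_def spanning_tree_def
    by blast
  then show "connects G F" using connects_mono by blast
next
  assume c: "connects G F"
  obtain T where T: "T \<subseteq> F \<and> connects G T" and min: "\<forall>T'. T' \<subseteq> F \<and> connects G T' \<longrightarrow> card T \<le> card T'"
    using ex_has_least_nat[where P = "\<lambda>T. T \<subseteq> F \<and> connects G T" and k = F and m = card] c by auto
  have TE: "T \<subseteq> edges G" using T assms(2) by blast
  have fT: "finite T" by (rule finite_subset[OF TE assms(1)])
  have nc: "\<forall>e\<in>T. \<not> connects G (T - {e})"
  proof (intro ballI notI)
    fix e assume e: "e \<in> T" and ce: "connects G (T - {e})"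
    have "T - {e} \<subseteq> F" using T by blast
    then have "card T \<le> card (T - {e})" using min ce by blast
    moreover have "card (T - {e}) < card T" by (rule card_Diff1_less[OF fT e])
    ultimately show False by simp
  qed
  from TE have "spanning_tree G T" unfolding spanning_tree_def using T nc by blast
  then show "contains_spanning_tree G F" unfolding contains_spanning_tree_def using T by blast
qed
lemma dc_iff:
  assumes "finite (edges G)"
  shows "doubly_connected G \<longleftrightarrow> (\<exists>Bk Bu. Bk \<subseteq> edges G \<and> Bu \<subseteq> edges G \<and> Bk \<inter> Bu = {} \<and>
     (\<forall>e\<in>Bk. kind G e = Diffusive) \<and> connects G Bk \<and> connects G Bu)"
proof -
  have k: "\<And>e. kind G e = BlueSolid \<or> kind G e = Diffusive" by (metis ekind.exhaust)
  show ?thesis unfolding doubly_connected_def using cst_iff[OF assms] k by meson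
qed

lemma split:
  assumes "connects H F" "b0 \<in> F" "endp H b0 = {M1, M2}" "M1 \<in> mols H"
    and "\<forall>e\<in>F \<inter> K - {b0}. endp H e \<subseteq> P" "z \<in> P" "z \<in> mols H"
  shows "(\<exists>w\<in>insert M2 P. (M1, w) \<in> (adj H (F - K))\<^sup>*) \<or> (\<exists>w\<in>insert M1 P. (M2, w) \<in> (adj H (F - K))\<^sup>*)"
proof (rule ccontr)
  let ?R = "adj H (F - K)"
  define S where "S = {w. (M1, w) \<in> ?R\<^sup>*} \<union> {w. (M2, w) \<in> ?R\<^sup>*}"
  assume n: "\<not> ?thesis"
  have SP: "S \<inter> P = {}" using n unfolding S_def by blast
  have "\<And>y. (M1, y) \<in> (adj H F)\<^sup>* \<Longrightarrow> y \<in> S"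
  proof -
    fix y assume "(M1, y) \<in> (adj H F)\<^sup>*"
    then show "y \<in> S"
    proof (induction rule: rtrancl_induct)
      case base then show ?case unfolding S_def by simp
    next
      case (step y z')
      then obtain e where e: "e \<in> F" "endp H e = {y, z'}" unfolding adj_def by blast
      show ?case
      proof (cases "e \<in> K")
        case True
        show ?thesis
        proof (cases "e = b0")
          case True
          then have "z' \<in> {M1, M2}" using e assms(3) by auto
          then show ?thesis unfolding S_def by auto
        next
          case False
          then have "y \<in> P" using e \<open>e \<in> K\<close> assms(5) by auto
          then show ?thesis using SP step.IH by blast
        qed
      next
        case False
        then have "(y, z') \<in> ?R" using e adj_edge[of e "F - K" H y z'] by blast
        have "(M1, y) \<in> ?R\<^sup>* \<or> (M2, y) \<in> ?R\<^sup>*" using step.IH by (simp add: S_def)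
        then have "(M1, z') \<in> ?R\<^sup>* \<or> (M2, z') \<in> ?R\<^sup>*"
          using \<open>(y, z') \<in> ?R\<close> by (meson rtrancl.rtrancl_into_rtrancl)
        then show ?thesis by (simp add: S_def)
      qed
    qed
  qed
  then have "z \<in> S" using assms(1,4,7) unfolding connects_def by blast
  then show False using SP assms(6) by blast
qed



lemma core_a:
  fixes H G' :: "('v, 'e) mgraph"
  assumes finE': "finite (edges G')"
  and Bk: "Bk \<subseteq> edges H" "\<forall>e\<in>Bk. kind H e = Diffusive" "connects H Bk"
  and Bu: "Bu \<subseteq> edges H" "connects H Bu" and disj: "Bk \<inter> Bu = {}"
  and b0: "endp H b0 = {M1, M2}" "M1 \<in> mols H"
  and bBk: "b \<notin> Bk"
  and bP: "b \<in> Bu \<Longrightarrow> endp H b \<subseteq> P"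
  and P: "P \<subseteq> mols H" "p0 \<in> P" and PY: "\<forall>p\<in>P. \<exists>y\<in>Y. endp G' y = {p, mnew}"
  and mols': "mols G' = insert mnew (mols H)"
  and old: "\<forall>e \<in> edges H - {b0, b}. e \<in> edges G' \<and> endp G' e = endp H e \<and> kind G' e = kind H e"
  and new: "b1 \<in> edges G'" "b2 \<in> edges G'" "kind G' b1 = Diffusive" "kind G' b2 = Diffusive"
     "endp G' b1 = {M1, mnew}" "endp G' b2 = {M2, mnew}" "Y \<subseteq> edges G'"
  and fresh: "b1 \<notin> edges H" "b2 \<notin> edges H" "Y \<inter> edges H = {}" "b1 \<notin> Y" "b2 \<notin> Y" "b1 \<noteq> b2"
  and nb0: "b0 \<notin> Bu"
  shows "doubly_connected G'"
proof -
  have oE: "\<And>e. e \<in> edges H \<Longrightarrow> e \<noteq> b0 \<Longrightarrow> e \<noteq> b \<Longrightarrow> e \<in> edges G'" using old by blast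
  define Bk' where "Bk' = (Bk - {b0}) \<union> {b1, b2}"
  define Bu' where "Bu' = (Bu - {b}) \<union> Y"
  have s1: "Bk' \<subseteq> edges G'" using Bk(1) bBk oE new unfolding Bk'_def by blast
  have s2: "Bu' \<subseteq> edges G'" using Bu(1) nb0 oE new unfolding Bu'_def by blast
  have d: "Bk' \<inter> Bu' = {}" using Bk(1) Bu(1) disj fresh unfolding Bk'_def Bu'_def by blast
  have k: "\<forall>e\<in>Bk'. kind G' e = Diffusive"
  proof
    fix e assume eB: "e \<in> Bk'"
    show "kind G' e = Diffusive"
    proof (cases "e \<in> Bk - {b0}")
      case True
      then have "e \<in> edges H - {b0, b}" using Bk(1) bBk by blast
      then have "kind G' e = kind H e" using old by blast
      then show ?thesis using Bk(2) True by simp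
    next
      case False
      then show ?thesis using eB new unfolding Bk'_def by auto
    qed
  qed
  have m1m: "(M1, mnew) \<in> (adj G' Bk')\<^sup>*" using adj_edge[of b1 Bk' G' M1 mnew] new unfolding Bk'_def by blast
  have mm2: "(mnew, M2) \<in> (adj G' Bk')\<^sup>*" using adj_edge[of b2 Bk' G' mnew M2] new unfolding Bk'_def
    by (simp add: insert_commute)
  have c1: "connects G' Bk'"
  proof (rule hub[where r = M1], intro ballI)
    fix x assume x: "x \<in> mols G'"
    show "(M1, x) \<in> (adj G' Bk')\<^sup>*"
    proof (cases "x = mnew")
      case True then show ?thesis using m1m by simp
    next
      case False
      then have "(M1, x) \<in> (adj H Bk)\<^sup>*" using x mols' Bk(3) b0(2) unfolding connects_def by auto
      then show ?thesis
      proof (rule sim)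
        fix e u v assume e: "e \<in> Bk" "endp H e = {u, v}"
        show "(u, v) \<in> (adj G' Bk')\<^sup>*"
        proof (cases "e = b0")
          case True
          have "(M1, M2) \<in> (adj G' Bk')\<^sup>*" using m1m mm2 by (meson rtrancl_trans)
          then show ?thesis using pair_sym[of u v M1 M2 G' Bk'] e True b0(1) by simp
        next
          case False
          then have "e \<in> Bk'" "endp G' e = {u, v}" using e old Bk(1) bBk unfolding Bk'_def by auto
          then show ?thesis by (intro r_into_rtrancl adj_edge)
        qed
      qed
    qed
  qed
  have W: "\<And>p. p \<in> P \<Longrightarrow> (p, mnew) \<in> (adj G' Bu')\<^sup>*"
  proof -
    fix p assume "p \<in> P"
    then obtain y where "y \<in> Y" "endp G' y = {p, mnew}" using PY by blast
    moreover have "y \<in> Bu'" using \<open>y \<in> Y\<close> unfolding Bu'_def by blast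
    ultimately show "(p, mnew) \<in> (adj G' Bu')\<^sup>*" by (intro r_into_rtrancl adj_edge)
  qed
  have c2: "connects G' Bu'"
  proof (rule hub[where r = M1], intro ballI)
    have simu: "\<And>x. (M1, x) \<in> (adj H Bu)\<^sup>* \<Longrightarrow> (M1, x) \<in> (adj G' Bu')\<^sup>*"
    proof -
      fix x assume "(M1, x) \<in> (adj H Bu)\<^sup>*"
      then show "(M1, x) \<in> (adj G' Bu')\<^sup>*"
      proof (rule sim)
        fix e u v assume e: "e \<in> Bu" "endp H e = {u, v}"
        show "(u, v) \<in> (adj G' Bu')\<^sup>*"
        proof (cases "e = b")
          case True
          then have "u \<in> P" "v \<in> P" using bP e by auto
          then have "(u, mnew) \<in> (adj G' Bu')\<^sup>*" "(mnew, v) \<in> (adj G' Bu')\<^sup>*"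
            using W[OF \<open>u \<in> P\<close>] adj_rt_sym[OF W[OF \<open>v \<in> P\<close>]] by blast+
          then show ?thesis by (rule rtrancl_trans)
        next
          case False
          then have "e \<in> Bu'" "endp G' e = {u, v}" using e old Bu(1) nb0 unfolding Bu'_def by auto
          then show ?thesis by (intro r_into_rtrancl adj_edge)
        qed
      qed
    qed
    fix x assume x: "x \<in> mols G'"
    show "(M1, x) \<in> (adj G' Bu')\<^sup>*"
    proof (cases "x = mnew")
      case True
      have "(M1, p0) \<in> (adj H Bu)\<^sup>*" using Bu(2) b0(2) P unfolding connects_def by auto
      then show ?thesis using simu W P(2) True by (meson rtrancl_trans)
    next
      case False
      then have "(M1, x) \<in> (adj H Bu)\<^sup>*" using x mols' Bu(2) b0(2) unfolding connects_def by auto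
      then show ?thesis using simu by blast
    qed
  qed
  show ?thesis unfolding dc_iff[OF finE'] using s1 s2 d k c1 c2 by (intro exI[of _ Bk'] exI[of _ Bu']) simp
qed

lemma core_b:
  fixes H G' :: "('v, 'e) mgraph"
  assumes finE': "finite (edges G')"
  and Bk: "Bk \<subseteq> edges H" "\<forall>e\<in>Bk. kind H e = Diffusive" "connects H Bk"
  and Bu: "Bu \<subseteq> edges H" "connects H Bu" and disj: "Bk \<inter> Bu = {}"
  and b0: "endp H b0 = {M1, M2}" "M1 \<in> mols H"
  and bBk: "b \<notin> Bk"
  and bP: "b \<in> Bu \<Longrightarrow> endp H b \<subseteq> P"
  and PY: "\<forall>p\<in>P. \<exists>y\<in>Y. endp G' y = {p, mnew}"
  and mols': "mols G' = insert mnew (mols H)"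
  and old: "\<forall>e \<in> edges H - {b0, b}. e \<in> edges G' \<and> endp G' e = endp H e \<and> kind G' e = kind H e"
  and new: "b1 \<in> edges G'" "b2 \<in> edges G'" "kind G' b1 = Diffusive"
     "endp G' b1 = {M1, mnew}" "endp G' b2 = {M2, mnew}" "Y \<subseteq> edges G'"
  and fresh: "b1 \<notin> edges H" "b2 \<notin> edges H" "Y \<inter> edges H = {}" "b1 \<notin> Y" "b1 \<noteq> b2"
  and yb0: "b0 \<in> Bu"
  and w: "w \<in> insert M2 P" "(M1, w) \<in> (adj H (Bu - {b0, b}))\<^sup>*"
  shows "doubly_connected G'"
proof -
  have oE: "\<And>e. e \<in> edges H \<Longrightarrow> e \<noteq> b0 \<Longrightarrow> e \<noteq> b \<Longrightarrow> e \<in> edges G'" using old by blast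
  define Bk' where "Bk' = insert b1 Bk"
  define Bu' where "Bu' = (Bu - {b0, b}) \<union> insert b2 Y"
  have nb0: "b0 \<notin> Bk" using yb0 disj by blast
  have s1: "Bk' \<subseteq> edges G'" using Bk(1) bBk nb0 oE new unfolding Bk'_def by blast
  have s2: "Bu' \<subseteq> edges G'" using Bu(1) oE new unfolding Bu'_def by blast
  have d: "Bk' \<inter> Bu' = {}" using Bk(1) Bu(1) disj fresh unfolding Bk'_def Bu'_def by blast
  have k: "\<forall>e\<in>Bk'. kind G' e = Diffusive"
  proof
    fix e assume eB: "e \<in> Bk'"
    show "kind G' e = Diffusive"
    proof (cases "e \<in> Bk")
      case True
      then have "e \<in> edges H - {b0, b}" using Bk(1) bBk nb0 by blast
      then have "kind G' e = kind H e" using old by blast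
      then show ?thesis using Bk(2) True by simp
    next
      case False
      then show ?thesis using eB new unfolding Bk'_def by auto
    qed
  qed
  have m1m: "(M1, mnew) \<in> (adj G' Bk')\<^sup>*"
    using new unfolding Bk'_def by (intro r_into_rtrancl adj_edge) auto
  have c1: "connects G' Bk'"
  proof (rule hub[where r = M1], intro ballI)
    fix x assume x: "x \<in> mols G'"
    show "(M1, x) \<in> (adj G' Bk')\<^sup>*"
    proof (cases "x = mnew")
      case True then show ?thesis using m1m by simp
    next
      case False
      then have "(M1, x) \<in> (adj H Bk)\<^sup>*" using x mols' Bk(3) b0(2) unfolding connects_def by auto
      then show ?thesis
      proof (rule sim)
        fix e u v assume e: "e \<in> Bk" "endp H e = {u, v}"
        then have "e \<in> Bk'" "endp G' e = {u, v}" using e old Bk(1) bBk nb0 unfolding Bk'_def by auto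
        then show "(u, v) \<in> (adj G' Bk')\<^sup>*" by (intro r_into_rtrancl adj_edge)
      qed
    qed
  qed
  have W: "\<And>p. p \<in> insert M2 P \<Longrightarrow> (p, mnew) \<in> (adj G' Bu')\<^sup>*"
  proof -
    fix p assume p: "p \<in> insert M2 P"
    have "\<exists>y. y \<in> insert b2 Y \<and> endp G' y = {p, mnew}"
    proof (cases "p = M2")
      case True then show ?thesis using new(5) by blast
    next
      case False then have "p \<in> P" using p by blast
      then obtain y where "y \<in> Y" "endp G' y = {p, mnew}" using PY by blast
      then show ?thesis by blast
    qed
    then obtain y where "y \<in> insert b2 Y" "endp G' y = {p, mnew}" by blast
    moreover have "y \<in> Bu'" using \<open>y \<in> insert b2 Y\<close> unfolding Bu'_def by blast
    ultimately show "(p, mnew) \<in> (adj G' Bu')\<^sup>*" by (intro r_into_rtrancl adj_edge)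
  qed
  have inner: "(M1, w) \<in> (adj G' Bu')\<^sup>*"
    using w(2)
  proof (rule sim)
    fix e u v assume e: "e \<in> Bu - {b0, b}" "endp H e = {u, v}"
    then have "e \<in> Bu'" "endp G' e = {u, v}" using e old Bu(1) unfolding Bu'_def by auto
    then show "(u, v) \<in> (adj G' Bu')\<^sup>*" by (intro r_into_rtrancl adj_edge)
  qed
  have m1mn: "(M1, mnew) \<in> (adj G' Bu')\<^sup>*" using inner W[OF w(1)] by (rule rtrancl_trans)
  have mnm2: "(mnew, M2) \<in> (adj G' Bu')\<^sup>*" using adj_rt_sym[OF W[of M2]] by simp
  have m12: "(M1, M2) \<in> (adj G' Bu')\<^sup>*" using m1mn mnm2 by (rule rtrancl_trans)
  have c2: "connects G' Bu'"
  proof (rule hub[where r = M1], intro ballI)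
    have simu: "\<And>x. (M1, x) \<in> (adj H Bu)\<^sup>* \<Longrightarrow> (M1, x) \<in> (adj G' Bu')\<^sup>*"
    proof -
      fix x assume "(M1, x) \<in> (adj H Bu)\<^sup>*"
      then show "(M1, x) \<in> (adj G' Bu')\<^sup>*"
      proof (rule sim)
        fix e u v assume e: "e \<in> Bu" "endp H e = {u, v}"
        show "(u, v) \<in> (adj G' Bu')\<^sup>*"
        proof (cases "e = b")
          case True
          then have "u \<in> P" "v \<in> P" using bP e by auto
          then have "(u, mnew) \<in> (adj G' Bu')\<^sup>*" "(mnew, v) \<in> (adj G' Bu')\<^sup>*"
            using W[of u] adj_rt_sym[OF W[of v]] \<open>u \<in> P\<close> \<open>v \<in> P\<close> by simp_all
          then show ?thesis by (rule rtrancl_trans)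
        next
          case False
          show ?thesis
          proof (cases "e = b0")
            case True
            then show ?thesis using pair_sym[of u v M1 M2 G' Bu'] e b0(1) m12 by simp
          next
            case False
            then have "e \<in> Bu'" "endp G' e = {u, v}" using e old Bu(1) \<open>e \<noteq> b\<close> unfolding Bu'_def by auto
            then show ?thesis by (intro r_into_rtrancl adj_edge)
          qed
        qed
      qed
    qed
    fix x assume x: "x \<in> mols G'"
    show "(M1, x) \<in> (adj G' Bu')\<^sup>*"
    proof (cases "x = mnew")
      case True
      then show ?thesis using m1mn by simp
    next
      case False
      then have "(M1, x) \<in> (adj H Bu)\<^sup>*" using x mols' Bu(2) b0(2) unfolding connects_def by auto
      then show ?thesis using simu by blast
    qed
  qed
  show ?thesis unfolding dc_iff[OF finE'] using s1 s2 d k c1 c2 by (intro exI[of _ Bk'] exI[of _ Bu']) simp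
qed

lemma core:
  fixes H G' :: "('v, 'e) mgraph"
  assumes finE': "finite (edges G')" and finE: "finite (edges H)" and dcH: "doubly_connected H"
  and bz: "bz \<in> edges H" "endp H bz = {Ma, Mb}" "Ma \<in> mols H" "Mb \<in> mols H"
  and bk: "b \<in> edges H \<Longrightarrow> kind H b = BlueSolid"
  and bP: "b \<in> edges H \<Longrightarrow> endp H b \<subseteq> P"
  and P: "P \<subseteq> mols H" "pz \<in> P" and PY: "\<forall>p\<in>P. \<exists>y\<in>Y. endp G' y = {p, mnew}"
  and mols': "mols G' = insert mnew (mols H)"
  and old: "\<forall>e \<in> edges H - {bz, b}. e \<in> edges G' \<and> endp G' e = endp H e \<and> kind G' e = kind H e"
  and new: "ea \<in> edges G'" "eb \<in> edges G'" "kind G' ea = Diffusive" "kind G' eb = Diffusive"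
     "endp G' ea = {Ma, mnew}" "endp G' eb = {Mb, mnew}" "Y \<subseteq> edges G'"
  and fresh: "ea \<notin> edges H" "eb \<notin> edges H" "Y \<inter> edges H = {}" "ea \<notin> Y" "eb \<notin> Y" "ea \<noteq> eb"
  shows "doubly_connected G'"
proof -
  obtain Bk Bu where B: "Bk \<subseteq> edges H" "Bu \<subseteq> edges H" "Bk \<inter> Bu = {}"
     "\<forall>e\<in>Bk. kind H e = Diffusive" "connects H Bk" "connects H Bu"
    using dcH unfolding dc_iff[OF finE] by blast
  have bBk: "b \<notin> Bk"
  proof
    assume "b \<in> Bk"
    then have "kind H b = Diffusive" "kind H b = BlueSolid" using B(1,4) bk by auto
    then show False by simp
  qed
  have bP': "b \<in> Bu \<Longrightarrow> endp H b \<subseteq> P" using bP B(2) by blast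
  show ?thesis
  proof (cases "bz \<in> Bu")
    case False
    show ?thesis
      by (rule core_a[OF finE' B(1,4,5) B(2,6,3) bz(2,3) bBk bP' P PY mols' old new fresh False])
  next
    case True
    have cond: "\<forall>e\<in>Bu \<inter> {bz, b} - {bz}. endp H e \<subseteq> P" using bP' by blast
    have "(\<exists>w\<in>insert Mb P. (Ma, w) \<in> (adj H (Bu - {bz, b}))\<^sup>*) \<or> (\<exists>w\<in>insert Ma P. (Mb, w) \<in> (adj H (Bu - {bz, b}))\<^sup>*)"
      by (rule split[OF B(6) True bz(2,3) cond P(2)]) (use P in blast)
    then show ?thesis
    proof
      assume "\<exists>w\<in>insert Mb P. (Ma, w) \<in> (adj H (Bu - {bz, b}))\<^sup>*"
      then obtain w where w: "w \<in> insert Mb P" "(Ma, w) \<in> (adj H (Bu - {bz, b}))\<^sup>*" by blast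
      show ?thesis
        by (rule core_b[OF finE' B(1,4,5) B(2,6,3) bz(2,3) bBk bP' PY mols' old new(1,2,3,5,6,7)
              fresh(1,2,3,4,6) True w])
    next
      assume "\<exists>w\<in>insert Ma P. (Mb, w) \<in> (adj H (Bu - {bz, b}))\<^sup>*"
      then obtain w where w: "w \<in> insert Ma P" "(Mb, w) \<in> (adj H (Bu - {bz, b}))\<^sup>*" by blast
      have bz': "endp H bz = {Mb, Ma}" using bz(2) by (simp add: insert_commute)
      have f': "eb \<noteq> ea" using fresh(6) by simp
      show ?thesis
        by (rule core_b[OF finE' B(1,4,5) B(2,6,3) bz' bz(4) bBk bP' PY mols' old new(2,1,4,6,5,7)
              fresh(2,1,3,5) f' True w])
    qed
  qed
qed



lemma md: "doubly_connected X \<Longrightarrow> doubly_connected (make_diffusive X a)"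
proof -
  assume "doubly_connected X"
  then obtain Bk Bu where B: "Bk \<subseteq> edges X" "Bu \<subseteq> edges X" "Bk \<inter> Bu = {}"
    "\<forall>e\<in>Bk. kind X e = Diffusive" "contains_spanning_tree X Bk" "contains_spanning_tree X Bu"
    unfolding doubly_connected_def by blast
  have cst: "\<And>F. contains_spanning_tree (make_diffusive X a) F = contains_spanning_tree X F"
    by (simp add: contains_spanning_tree_def spanning_tree_def connects_def adj_def make_diffusive_def)
  have k: "\<forall>e\<in>Bk. kind (make_diffusive X a) e = Diffusive" using B(4) by (simp add: make_diffusive_def)
  have k2: "\<And>e. kind (make_diffusive X a) e = BlueSolid \<or> kind (make_diffusive X a) e = Diffusive"
    by (metis ekind.exhaust)
  have ed: "edges (make_diffusive X a) = edges X" by (simp add: make_diffusive_def)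
  show ?thesis unfolding doubly_connected_def ed cst
    by (intro exI[of _ Bk] exI[of _ Bu] conjI) (use B k k2 in blast)+
qed

lemma dm_comm: "delete_edge (make_diffusive X a) c = make_diffusive (delete_edge X c) a"
  by (simp add: delete_edge_def make_diffusive_def)

lemma wf_endp: "wf_mgraph G \<Longrightarrow> e \<in> edges G \<Longrightarrow> endp G e \<subseteq> mols G"
  unfolding wf_mgraph_def by fastforce

theorem claimA4:
  fixes G :: "('v, 'e) mgraph" and mnew M1 M2 M3 M4 :: 'v and b0 b b1 b2 b3 b4 :: 'e
  assumes "wf_mgraph G" and "doubly_connected G"
    and "b0 \<in> edges G" and "kind G b0 = Diffusive" and "endp G b0 = {M1, M2}"
    and "b \<in> edges G" and "kind G b = BlueSolid" and "endp G b = {M3, M4}"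
    and "mnew \<notin> mols G"
    and "b1 \<notin> edges G" and "b2 \<notin> edges G" and "b3 \<notin> edges G" and "b4 \<notin> edges G"
    and "distinct [b1, b2, b3, b4]"
  defines "Gnew \<equiv> subdivide2 G mnew b0 b b1 b2 b3 b4 M1 M2 M3 M4"
  shows "(\<forall>e. e \<in> edges G \<and> kind G e = BlueSolid \<and> e \<noteq> b \<and> redundant G e
              \<longrightarrow> redundant Gnew e)
       \<and> (redundant G b \<longrightarrow>
            (redundant Gnew b3 \<or> redundant Gnew b4)
          \<and> (redundant Gnew b3 \<longrightarrow> redundant (make_diffusive Gnew b3) b4)
          \<and> (redundant Gnew b4 \<longrightarrow> redundant (make_diffusive Gnew b4) b3))"
proof -
  note A = assms
  have finE: "finite (edges G)" using A(1) unfolding wf_mgraph_def by blast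
  have M12: "M1 \<in> mols G" "M2 \<in> mols G" using wf_endp[OF A(1) A(3)] A(5) by auto
  have M34: "M3 \<in> mols G" "M4 \<in> mols G" using wf_endp[OF A(1) A(6)] A(8) by auto
  have dist: "b1 \<noteq> b2" "b1 \<noteq> b3" "b1 \<noteq> b4" "b2 \<noteq> b3" "b2 \<noteq> b4" "b3 \<noteq> b4" using A(14) by auto
  have bb0: "b \<noteq> b0" using A(4,7) by auto
  have nb: "b1 \<noteq> b0" "b2 \<noteq> b0" "b3 \<noteq> b0" "b4 \<noteq> b0" "b1 \<noteq> b" "b2 \<noteq> b" "b3 \<noteq> b" "b4 \<noteq> b"
    using A(3,6,10-13) by auto
  have Gm: "mols Gnew = insert mnew (mols G)" by (simp add: Gnew_def subdivide2_def)
  have Ge: "edges Gnew = (edges G - {b0, b}) \<union> {b1, b2, b3, b4}" by (simp add: Gnew_def subdivide2_def)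
  have Gp: "endp Gnew b1 = {M1, mnew}" "endp Gnew b2 = {M2, mnew}" "endp Gnew b3 = {M3, mnew}" "endp Gnew b4 = {M4, mnew}"
    using dist by (simp_all add: Gnew_def subdivide2_def)
  have Gk: "kind Gnew b1 = Diffusive" "kind Gnew b2 = Diffusive" "kind Gnew b3 = BlueSolid" "kind Gnew b4 = BlueSolid"
    using dist by (simp_all add: Gnew_def subdivide2_def)
  have Go: "\<And>e. e \<in> edges G \<Longrightarrow> endp Gnew e = endp G e \<and> kind Gnew e = kind G e"
  proof -
    fix e assume "e \<in> edges G"
    then have "e \<noteq> b1" "e \<noteq> b2" "e \<noteq> b3" "e \<noteq> b4" using A(10-13) by auto
    then show "endp Gnew e = endp G e \<and> kind Gnew e = kind G e" by (simp add: Gnew_def subdivide2_def)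
  qed
  have finN: "finite (edges Gnew)" using finE Ge by simp
  have fr: "b1 \<notin> edges G" "b2 \<notin> edges G" "{b3, b4} \<inter> edges G = {}" "b1 \<notin> {b3, b4}" "b2 \<notin> {b3, b4}"
    using A(10-13) dist by auto
  have PY: "\<forall>p\<in>{M3, M4}. \<exists>y\<in>{b3, b4}. endp Gnew y = {p, mnew}" using Gp by auto
  have dcN: "doubly_connected Gnew"
  proof (rule core[OF finN finE A(2) A(3) A(5) M12, where b = b and P = "{M3, M4}" and pz = M3 and Y = "{b3, b4}"
        and ea = b1 and eb = b2])
    show "kind G b = BlueSolid" by (rule A(7))
    show "endp G b \<subseteq> {M3, M4}" using A(8) by simp
    show "{M3, M4} \<subseteq> mols G" using M34 by simp
    show "M3 \<in> {M3, M4}" by simp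
    show "\<forall>p\<in>{M3, M4}. \<exists>y\<in>{b3, b4}. endp Gnew y = {p, mnew}" by (rule PY)
    show "mols Gnew = insert mnew (mols G)" by (rule Gm)
    show "\<forall>e\<in>edges G - {b0, b}. e \<in> edges Gnew \<and> endp Gnew e = endp G e \<and> kind Gnew e = kind G e"
      using Ge Go by auto
    show "b1 \<in> edges Gnew" "b2 \<in> edges Gnew" "{b3, b4} \<subseteq> edges Gnew" using Ge by auto
  qed (use Gk Gp fr dist in auto)
  have partI: "\<forall>e. e \<in> edges G \<and> kind G e = BlueSolid \<and> e \<noteq> b \<and> redundant G e \<longrightarrow> redundant Gnew e"
  proof (intro allI impI)
    fix e assume h: "e \<in> edges G \<and> kind G e = BlueSolid \<and> e \<noteq> b \<and> redundant G e"
    then have eE: "e \<in> edges G" and ek: "kind G e = BlueSolid" and eb: "e \<noteq> b" and r: "redundant G e" by auto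
    have eb0: "e \<noteq> b0" using ek A(4) by auto
    have eN: "e \<noteq> b1" "e \<noteq> b2" "e \<noteq> b3" "e \<noteq> b4" using eE A(10-13) by auto
    have dcD: "doubly_connected (delete_edge G e)" using r unfolding redundant_def by blast
    let ?H = "delete_edge G e" and ?G' = "delete_edge Gnew e"
    have Hm: "mols ?H = mols G" "edges ?H = edges G - {e}" "endp ?H = endp G" "kind ?H = kind G"
      by (simp_all add: delete_edge_def)
    have Nm: "mols ?G' = mols Gnew" "edges ?G' = edges Gnew - {e}" "endp ?G' = endp Gnew" "kind ?G' = kind Gnew"
      by (simp_all add: delete_edge_def)
    have "doubly_connected ?G'"
    proof (rule core[where H = ?H and b = b and P = "{M3, M4}" and pz = M3 and Y = "{b3, b4}"
        and ea = b1 and eb = b2 and mnew = mnew])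
      show "finite (edges ?G')" using finN Nm by simp
      show "finite (edges ?H)" using finE Hm by simp
      show "doubly_connected ?H" by (rule dcD)
      show "b0 \<in> edges ?H" using Hm A(3) eb0 by simp
      show "endp ?H b0 = {M1, M2}" "M1 \<in> mols ?H" "M2 \<in> mols ?H" using Hm A(5) M12 by simp_all
      show "kind ?H b = BlueSolid" using Hm A(7) by simp
      show "endp ?H b \<subseteq> {M3, M4}" using Hm A(8) by simp
      show "{M3, M4} \<subseteq> mols ?H" using Hm M34 by simp
      show "M3 \<in> {M3, M4}" by simp
      show "\<forall>p\<in>{M3, M4}. \<exists>y\<in>{b3, b4}. endp ?G' y = {p, mnew}" using PY Nm by simp
      show "mols ?G' = insert mnew (mols ?H)" using Gm Nm Hm by simp
      show "\<forall>x\<in>edges ?H - {b0, b}. x \<in> edges ?G' \<and> endp ?G' x = endp ?H x \<and> kind ?G' x = kind ?H x"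
        using Ge Go Hm Nm A(10-13) by auto
      show "b1 \<in> edges ?G'" "b2 \<in> edges ?G'" "{b3, b4} \<subseteq> edges ?G'" using Ge Nm eN by auto
      show "kind ?G' b1 = Diffusive" "kind ?G' b2 = Diffusive" "endp ?G' b1 = {M1, mnew}" "endp ?G' b2 = {M2, mnew}"
        using Gk Gp Nm by simp_all
      show "b1 \<notin> edges ?H" "b2 \<notin> edges ?H" "{b3, b4} \<inter> edges ?H = {}" "b1 \<notin> {b3, b4}" "b2 \<notin> {b3, b4}" "b1 \<noteq> b2"
        using fr Hm dist by auto
    qed
    moreover have "e \<in> edges Gnew" using Ge eE eb eb0 by simp
    moreover have "kind Gnew e = BlueSolid" using Go[OF eE] ek by simp
    ultimately show "redundant Gnew e" unfolding redundant_def using dcN by blast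
  qed
  have del3: "doubly_connected (delete_edge Gnew b3)" and del4: "doubly_connected (delete_edge Gnew b4)"
    if r: "redundant G b"
  proof -
    have dcD: "doubly_connected (delete_edge G b)" using r unfolding redundant_def by blast
    let ?H = "delete_edge G b"
    have Hm: "mols ?H = mols G" "edges ?H = edges G - {b}" "endp ?H = endp G" "kind ?H = kind G"
      by (simp_all add: delete_edge_def)
    have nbH: "b \<notin> edges ?H" using Hm by simp
    show "doubly_connected (delete_edge Gnew b3)"
    proof (rule core[where H = ?H and b = b and P = "{M4}" and pz = M4 and Y = "{b4}"
        and ea = b1 and eb = b2 and mnew = mnew])
      let ?G' = "delete_edge Gnew b3"
      have Nm: "mols ?G' = mols Gnew" "edges ?G' = edges Gnew - {b3}" "endp ?G' = endp Gnew" "kind ?G' = kind Gnew"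
        by (simp_all add: delete_edge_def)
      show "finite (edges ?G')" using finN Nm by simp
      show "finite (edges ?H)" using finE Hm by simp
      show "doubly_connected ?H" by (rule dcD)
      show "b0 \<in> edges ?H" using Hm A(3) bb0 by simp
      show "endp ?H b0 = {M1, M2}" "M1 \<in> mols ?H" "M2 \<in> mols ?H" using Hm A(5) M12 by simp_all
      show "b \<in> edges ?H \<Longrightarrow> kind ?H b = BlueSolid" using nbH by simp
      show "b \<in> edges ?H \<Longrightarrow> endp ?H b \<subseteq> {M4}" using nbH by simp
      show "{M4} \<subseteq> mols ?H" using Hm M34 by simp
      show "M4 \<in> {M4}" by simp
      show "\<forall>p\<in>{M4}. \<exists>y\<in>{b4}. endp ?G' y = {p, mnew}" using Gp Nm by simp
      show "mols ?G' = insert mnew (mols ?H)" using Gm Nm Hm by simp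
      show "\<forall>x\<in>edges ?H - {b0, b}. x \<in> edges ?G' \<and> endp ?G' x = endp ?H x \<and> kind ?G' x = kind ?H x"
        using Ge Go Hm Nm A(10-13) by auto
      show "b1 \<in> edges ?G'" "b2 \<in> edges ?G'" "{b4} \<subseteq> edges ?G'" using Ge Nm dist by auto
      show "kind ?G' b1 = Diffusive" "kind ?G' b2 = Diffusive" "endp ?G' b1 = {M1, mnew}" "endp ?G' b2 = {M2, mnew}"
        using Gk Gp Nm by simp_all
      show "b1 \<notin> edges ?H" "b2 \<notin> edges ?H" "{b4} \<inter> edges ?H = {}" "b1 \<notin> {b4}" "b2 \<notin> {b4}" "b1 \<noteq> b2"
        using fr Hm dist by auto
    qed
    show "doubly_connected (delete_edge Gnew b4)"
    proof (rule core[where H = ?H and b = b and P = "{M3}" and pz = M3 and Y = "{b3}"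
        and ea = b1 and eb = b2 and mnew = mnew])
      let ?G' = "delete_edge Gnew b4"
      have Nm: "mols ?G' = mols Gnew" "edges ?G' = edges Gnew - {b4}" "endp ?G' = endp Gnew" "kind ?G' = kind Gnew"
        by (simp_all add: delete_edge_def)
      show "finite (edges ?G')" using finN Nm by simp
      show "finite (edges ?H)" using finE Hm by simp
      show "doubly_connected ?H" by (rule dcD)
      show "b0 \<in> edges ?H" using Hm A(3) bb0 by simp
      show "endp ?H b0 = {M1, M2}" "M1 \<in> mols ?H" "M2 \<in> mols ?H" using Hm A(5) M12 by simp_all
      show "b \<in> edges ?H \<Longrightarrow> kind ?H b = BlueSolid" using nbH by simp
      show "b \<in> edges ?H \<Longrightarrow> endp ?H b \<subseteq> {M3}" using nbH by simp
      show "{M3} \<subseteq> mols ?H" using Hm M34 by simp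
      show "M3 \<in> {M3}" by simp
      show "\<forall>p\<in>{M3}. \<exists>y\<in>{b3}. endp ?G' y = {p, mnew}" using Gp Nm by simp
      show "mols ?G' = insert mnew (mols ?H)" using Gm Nm Hm by simp
      show "\<forall>x\<in>edges ?H - {b0, b}. x \<in> edges ?G' \<and> endp ?G' x = endp ?H x \<and> kind ?G' x = kind ?H x"
        using Ge Go Hm Nm A(10-13) by auto
      show "b1 \<in> edges ?G'" "b2 \<in> edges ?G'" "{b3} \<subseteq> edges ?G'" using Ge Nm dist by auto
      show "kind ?G' b1 = Diffusive" "kind ?G' b2 = Diffusive" "endp ?G' b1 = {M1, mnew}" "endp ?G' b2 = {M2, mnew}"
        using Gk Gp Nm by simp_all
      show "b1 \<notin> edges ?H" "b2 \<notin> edges ?H" "{b3} \<inter> edges ?H = {}" "b1 \<notin> {b3}" "b2 \<notin> {b3}" "b1 \<noteq> b2"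
        using fr Hm dist by auto
    qed
  qed
  have b34N: "b3 \<in> edges Gnew" "b4 \<in> edges Gnew" using Ge by auto
  have md_e: "edges (make_diffusive X a) = edges X" "kind (make_diffusive X a) c = (if c = a then Diffusive else kind X c)" for X :: "('v, 'e) mgraph" and a c
    by (simp_all add: make_diffusive_def)
  have partII: "redundant G b \<longrightarrow>
            (redundant Gnew b3 \<or> redundant Gnew b4)
          \<and> (redundant Gnew b3 \<longrightarrow> redundant (make_diffusive Gnew b3) b4)
          \<and> (redundant Gnew b4 \<longrightarrow> redundant (make_diffusive Gnew b4) b3)"
  proof
    assume r: "redundant G b"
    have r3: "redundant Gnew b3" unfolding redundant_def using dcN b34N Gk del3[OF r] by blast
    have dd3: "doubly_connected (delete_edge (make_diffusive Gnew b3) b4)"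
      unfolding dm_comm by (rule md[OF del4[OF r]])
    have m3: "redundant (make_diffusive Gnew b3) b4" unfolding redundant_def
      using md[OF dcN] dd3 b34N Gk dist md_e by simp
    have dd4: "doubly_connected (delete_edge (make_diffusive Gnew b4) b3)"
      unfolding dm_comm by (rule md[OF del3[OF r]])
    have m4: "redundant (make_diffusive Gnew b4) b3" unfolding redundant_def
      using md[OF dcN] dd4 b34N Gk dist md_e by simp
    show "(redundant Gnew b3 \<or> redundant Gnew b4)
          \<and> (redundant Gnew b3 \<longrightarrow> redundant (make_diffusive Gnew b3) b4)
          \<and> (redundant Gnew b4 \<longrightarrow> redundant (make_diffusive Gnew b4) b3)"
      using r3 m3 m4 by blast
  qed
  show ?thesis using partI partII by blast
qed

end
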